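(* Fix $\lambda>0$. There exists $c_0=c_0(\lambda)>0$ such that for every $a\in[0,1]$ and every configuration of $\eta$ outside $\Lambda(0)$ for which $0$ is a thin point, $$\mathbb P_\lambda\big[0<\mathrm{w}(0)<2a\ \big|\ \eta \text{ outside }\Lambda(0)\big]\ \ge\ c_0a^2 .$$
   Context: Under $\mathbb P_\lambda$, $\eta$ is a Poisson point process on $\mathbb R^2$ of intensity $\lambda\cdot\mathrm{Leb}$, and each point carries a closed disc of radius $1$ centred at it (the occupied set is the union of these discs). Let $\Lambda(0)=[-2,2]^2$. The point $0$ is called thin if $\eta$ has exactly two points in $[-4,4]^2\setminus\Lambda(0)$, one of them, $\ell(0)$, in $[-3.5,-2.5]\times[-1,1]$ and the other, $r(0)$, in $[2.5,3.5]\times[-1,1]$ (this depends only on $\eta$ outside $\Lambda(0)$). On this event, let $U$ be the union of the unit discs centred at $\ell(0)$, $r(0)$ and at the points of $\eta$ in $\Lambda(0)$, and let $\mathrm{w}(0)$ be the maximal width of the occupied connection between $\ell(0)$ and $r(0)$ produced by the discs centred in $\Lambda(0)$, namely $\mathrm{w}(0)=2\sup_\gamma\mathrm{dist}(\gamma,\mathbb R^2\setminus U)$ over paths $\gamma\subset U$ from $\ell(0)$ to $r(0)$, with $\mathrm{w}(0)=0$ if no such path exists. Conditionally on $\eta$ outside $\Lambda(0)$, $\eta\cap\Lambda(0)$ is a Poisson process of intensity $\lambda$ on $\Lambda(0)$. *)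

theory Defs
  imports "HOL-Analysis.Analysis" "HOL-Probability.Probability"
begin

type_synonym pt = "real \<times> real"

definition Lambda0 :: "pt set" where
  "Lambda0 = {-2..2} \<times> {-2..2}"

definition left_box :: "pt set" where
  "left_box = {-3.5..-2.5} \<times> {-1..1}"

definition right_box :: "pt set" where
  "right_box = {2.5..3.5} \<times> {-1..1}"

text \<open>Law of a Poisson point process of intensity lam (times Lebesgue) on a bounded
  Borel set B, given through its Janossy densities: the probability of an event E
  (a set of finite point configurations) is
  sum over n of exp(-lam |B|) lam^n / n! times the integral over B^n of the indicator
  of E evaluated at the configuration of the n points.\<close>
definition ppp_prob :: "real \<Rightarrow> pt set \<Rightarrow> pt set set \<Rightarrow> ennreal" where
  "ppp_prob lam B E =
     (\<Sum>n. ennreal (exp (- lam * measure lborel B) * lam ^ n / fact n) *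
        (\<integral>\<^sup>+ xs. indicator E (xs ` {..<n})
            \<partial>(PiM {..<n} (\<lambda>_. restrict_space lborel B))))"

definition occ :: "pt \<Rightarrow> pt \<Rightarrow> pt set \<Rightarrow> pt set" where
  "occ l r X = cball l 1 \<union> cball r 1 \<union> (\<Union>x\<in>X. cball x 1)"

definition width :: "pt \<Rightarrow> pt \<Rightarrow> pt set \<Rightarrow> real" where
  "width l r X =
     (let U = occ l r X;
          P = {g. path g \<and> pathstart g = l \<and> pathfinish g = r \<and> path_image g \<subseteq> U}
      in if P = {} then 0 else 2 * (SUP g\<in>P. setdist (path_image g) (- U)))"

end

theory Submission
  imports Defs
begin

lemma seg_half:
  fixes x y p :: pt
  assumes "p \<in> closed_segment x y"
  shows "dist p x \<le> dist x y / 2 \<or> dist p y \<le> dist x y / 2"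
proof -
  have "dist x y = dist x p + dist p y"
    using assms by (simp add: between between_mem_segment[symmetric])
  thus ?thesis by (simp add: dist_commute) linarith
qed

lemma seg_far:
  fixes x y p t :: pt
  assumes "p \<in> closed_segment x y" "dist x y \<le> d" "dist x t > 1" "dist y t > 1"
  shows "dist p t \<ge> 1 - d/2"
proof -
  from seg_half[OF assms(1)] show ?thesis
  proof
    assume "dist p x \<le> dist x y / 2"
    moreover have "dist x t \<le> dist p x + dist p t" by (metis dist_commute dist_triangle)
    ultimately show ?thesis using assms by linarith
  next
    assume "dist p y \<le> dist x y / 2"
    moreover have "dist y t \<le> dist p y + dist p t" by (metis dist_commute dist_triangle)
    ultimately show ?thesis using assms by linarith
  qed
qed

lemma seg_in:
  fixes x y :: pt
  assumes "dist x y < 2"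
  shows "closed_segment x y \<subseteq> cball x 1 \<union> cball y 1"
proof
  fix p assume "p \<in> closed_segment x y"
  from seg_half[OF this] assms show "p \<in> cball x 1 \<union> cball y 1"
    by (auto simp: dist_commute)
qed

lemma width_bdd:
  fixes l r :: pt and X :: "pt set"
  defines "U \<equiv> occ l r X"
  defines "P \<equiv> {g. path g \<and> pathstart g = l \<and> pathfinish g = r \<and> path_image g \<subseteq> U}"
  shows "bdd_above ((\<lambda>g. setdist (path_image g) (- U)) ` P)"
proof (rule bdd_aboveI2)
  fix g assume "g \<in> P"
  hence "l \<in> path_image g" unfolding P_def by (metis (mono_tags, lifting) mem_Collect_eq pathstart_in_path_image)
  thus "setdist (path_image g) (- U) \<le> setdist {l} (- U)"
    by (intro setdist_subset_left) auto
qed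

lemma width_pos:
  fixes l r A B C D :: pt
  assumes d1: "dist l A < 2" and d2: "dist A B < 2" and d3: "dist B C < 2"
    and d4: "dist C D < 2" and d5: "dist D r < 2"
  shows "width l r {A,B,C,D} > 0"
proof -
  define U where "U = occ l r {A,B,C,D}"
  define P where "P = {g. path g \<and> pathstart g = l \<and> pathfinish g = r \<and> path_image g \<subseteq> U}"
  define g where "g = linepath l A +++ (linepath A B +++ (linepath B C +++ (linepath C D +++ linepath D r)))"
  have pg: "path g" unfolding g_def by simp
  have sg: "pathstart g = l" "pathfinish g = r" unfolding g_def by simp_all
  have ig: "path_image g = closed_segment l A \<union> closed_segment A B \<union> closed_segment B C
      \<union> closed_segment C D \<union> closed_segment D r"
    unfolding g_def by (simp add: path_image_join Un_assoc)
  have "path_image g \<subseteq> U"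
    unfolding ig U_def occ_def using seg_in[OF d1] seg_in[OF d2] seg_in[OF d3] seg_in[OF d4] seg_in[OF d5]
    by auto
  hence gP: "g \<in> P" unfolding P_def using pg sg by auto
  define d where "d = Max {dist l A, dist A B, dist B C, dist C D, dist D r}"
  have d_lt: "d < 2" unfolding d_def using assms by simp
  have dge: "dist l A \<le> d" "dist A B \<le> d" "dist B C \<le> d" "dist C D \<le> d" "dist D r \<le> d"
    unfolding d_def by simp_all
  have far: "1 - d/2 \<le> dist p t" if "p \<in> path_image g" "t \<in> - U" for p t
  proof -
    have out: "dist c t > 1" if "c \<in> {l, r, A, B, C, D}" for c
      using \<open>t \<in> - U\<close> that unfolding U_def occ_def by (auto simp: not_le)
    from \<open>p \<in> path_image g\<close> show ?thesis unfolding ig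
      using seg_far[OF _ dge(1) out out] seg_far[OF _ dge(2) out out] seg_far[OF _ dge(3) out out]
        seg_far[OF _ dge(4) out out] seg_far[OF _ dge(5) out out]
      by (simp only: Un_iff insert_iff) blast
  qed
  have "- U \<noteq> {}"
  proof -
    have "bounded U" unfolding U_def occ_def by simp
    thus ?thesis using not_bounded_UNIV by (metis Compl_empty_eq double_compl)
  qed
  moreover have "path_image g \<noteq> {}" by simp
  ultimately have sd: "1 - d/2 \<le> setdist (path_image g) (- U)"
    using far by (simp add: le_setdist_iff)
  have "setdist (path_image g) (- U) \<le> (SUP g\<in>P. setdist (path_image g) (- U))"
    by (rule cSUP_upper[OF gP]) (use width_bdd[of l r "{A,B,C,D}"] in \<open>simp add: U_def P_def\<close>)
  moreover have "P \<noteq> {}" using gP by auto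
  ultimately show ?thesis using sd d_lt unfolding width_def Let_def U_def[symmetric] P_def[symmetric]
    by simp
qed


lemma perp_dist:
  fixes x m v :: pt
  assumes "inner (x - m) v = 0"
  shows "(dist x (m - (1/2) *\<^sub>R v))\<^sup>2 = (dist x m)\<^sup>2 + (norm v)\<^sup>2 / 4"
    and "(dist x (m + (1/2) *\<^sub>R v))\<^sup>2 = (dist x m)\<^sup>2 + (norm v)\<^sup>2 / 4"
proof -
  have e1: "x - (m - (1/2) *\<^sub>R v) = (x - m) + (1/2) *\<^sub>R v" by (simp add: algebra_simps)
  have e2: "x - (m + (1/2) *\<^sub>R v) = (x - m) - (1/2) *\<^sub>R v" by (simp add: algebra_simps)
  show "(dist x (m - (1/2) *\<^sub>R v))\<^sup>2 = (dist x m)\<^sup>2 + (norm v)\<^sup>2 / 4"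
    unfolding dist_norm e1 power2_norm_eq_inner using assms
    by (simp add: inner_add_left inner_add_right inner_commute power2_eq_square)
  show "(dist x (m + (1/2) *\<^sub>R v))\<^sup>2 = (dist x m)\<^sup>2 + (norm v)\<^sup>2 / 4"
    unfolding dist_norm e2 power2_norm_eq_inner using assms
    by (simp add: inner_diff_left inner_diff_right inner_commute power2_eq_square)
qed

lemma perp_far:
  fixes x c m v :: pt
  assumes "inner (x - m) v = 0" "2 < inner (c - m) v" "norm v < 2"
  shows "1 < dist x c"
proof -
  have "inner (c - x) v = inner (c - m) v - inner (x - m) v" by (simp add: inner_diff_left)
  hence "2 < inner (c - x) v" using assms by simp
  also have "\<dots> \<le> norm (c - x) * norm v" by (rule norm_cauchy_schwarz)
  also have "\<dots> \<le> norm (c - x) * 2" using assms(3) by (intro mult_left_mono) auto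
  finally show ?thesis by (simp add: dist_norm norm_minus_commute)
qed

lemma width_small:
  fixes l r A B C D :: pt and a :: real
  assumes nv: "0 < norm (A - l)" "norm (A - l) < 2"
    and fB: "2 < inner (B - (l + (1/2) *\<^sub>R (A - l))) (A - l)"
    and fC: "2 < inner (C - (l + (1/2) *\<^sub>R (A - l))) (A - l)"
    and fD: "2 < inner (D - (l + (1/2) *\<^sub>R (A - l))) (A - l)"
    and fr: "2 < inner (r - (l + (1/2) *\<^sub>R (A - l))) (A - l)"
    and ha: "3 * sqrt (1 - (norm (A - l))\<^sup>2 / 4) < a"
  shows "width l r {A,B,C,D} < 2 * a"
proof -
  define v where "v = A - l"
  define m where "m = l + (1/2) *\<^sub>R v"
  define h where "h = sqrt (1 - (norm v)\<^sup>2 / 4)"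
  define U where "U = occ l r {A,B,C,D}"
  define P where "P = {g. path g \<and> pathstart g = l \<and> pathfinish g = r \<and> path_image g \<subseteq> U}"
  have lm: "l = m - (1/2) *\<^sub>R v" and Am: "A = m + (1/2) *\<^sub>R v"
    unfolding m_def v_def by (simp_all add: algebra_simps flip: scaleR_add_left)
  have nv2: "(norm v)\<^sup>2 < 4" using power_strict_mono[of "norm v" 2 2] nv unfolding v_def by simp
  have hpos: "0 < h" unfolding h_def using nv2 by simp
  have hsq: "h\<^sup>2 = 1 - (norm v)\<^sup>2 / 4" unfolding h_def using nv2 by simp
  have far: "1 < dist x c" if "inner (x - m) v = 0" "c \<in> {B, C, D, r}" for x c
  proof -
    have "2 < inner (c - m) v" using that(2) fB fC fD fr unfolding m_def v_def by blast
    thus ?thesis using perp_far[OF that(1) _ nv(2)[folded v_def]] by blast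
  qed
  have bound: "setdist (path_image g) (- U) \<le> 3 * h" if "g \<in> P" for g
  proof -
    have pg: "continuous_on {0..1} g" and g0: "g 0 = l" and g1: "g 1 = r" and gU: "path_image g \<subseteq> U"
      using that unfolding P_def path_def pathstart_def pathfinish_def by auto
    have "continuous_on {0..1} (\<lambda>t. inner (g t - m) v)"
      by (intro continuous_intros pg)
    moreover have "inner (g 0 - m) v \<le> 0" unfolding g0 lm
      by (simp add: inner_diff_left)
    moreover have "0 \<le> inner (g 1 - m) v" using fr unfolding g1 m_def v_def by simp
    ultimately obtain t where t: "0 \<le> t" "t \<le> 1" "inner (g t - m) v = 0"
      using IVT'[of "\<lambda>t. inner (g t - m) v" 0 0 1] by auto
    define p where "p = g t"
    have pimg: "p \<in> path_image g" unfolding p_def path_image_def using t by auto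
    have pm: "inner (p - m) v = 0" using t p_def by simp
    have "p \<in> U" using pimg gU by auto
    moreover have "1 < dist p B" "1 < dist p C" "1 < dist p D" "1 < dist p r"
      by (rule far[OF pm]; simp)+
    ultimately have "dist p l \<le> 1 \<or> dist p A \<le> 1" unfolding U_def occ_def
      by (simp add: dist_commute)
    hence "(dist p l)\<^sup>2 \<le> 1 \<or> (dist p A)\<^sup>2 \<le> 1" by (auto intro: power_le_one)
    hence "(dist p m)\<^sup>2 + (norm v)\<^sup>2 / 4 \<le> 1"
      using perp_dist[OF pm] unfolding lm[symmetric] Am[symmetric] by auto
    hence "(dist p m)\<^sup>2 \<le> h\<^sup>2" using hsq by simp
    hence pmh: "dist p m \<le> h" using hpos by (simp add: power2_le_iff_abs_le)
    define n :: pt where "n = (- snd v, fst v)"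
    have nn: "norm n = norm v" unfolding n_def
      by (cases v) (simp add: norm_Pair)
    have vpos: "0 < norm v" using nv v_def by simp
    define q where "q = m + (2 * h / norm v) *\<^sub>R n"
    have qm: "inner (q - m) v = 0" unfolding q_def n_def
      by (cases v) (simp add: inner_Pair algebra_simps)
    have dqm: "dist q m = 2 * h" unfolding q_def dist_norm using nn vpos hpos by simp
    have "q \<notin> U"
    proof -
      have "(dist q l)\<^sup>2 = 4 * h\<^sup>2 + (norm v)\<^sup>2 / 4" "(dist q A)\<^sup>2 = 4 * h\<^sup>2 + (norm v)\<^sup>2 / 4"
        using perp_dist[OF qm] unfolding lm[symmetric] Am[symmetric] dqm by (simp_all add: power2_eq_square)
      hence "1 < (dist q l)\<^sup>2" "1 < (dist q A)\<^sup>2" using hsq hpos nv2 by simp_all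
      hence "1 < dist q l" "1 < dist q A"
        by (metis not_le power_le_one zero_le_dist)+
      moreover have "1 < dist q B" "1 < dist q C" "1 < dist q D" "1 < dist q r"
        by (rule far[OF qm]; simp)+
      ultimately show ?thesis unfolding U_def occ_def by (simp add: dist_commute)
    qed
    hence "setdist (path_image g) (- U) \<le> dist p q"
      by (intro setdist_le_dist pimg) auto
    also have "\<dots> \<le> dist p m + dist m q" by (rule dist_triangle)
    also have "\<dots> \<le> 3 * h" using pmh dqm by (simp add: dist_commute)
    finally show ?thesis .
  qed
  have "width l r {A,B,C,D} \<le> 6 * h"
  proof (cases "P = {}")
    case True
    thus ?thesis unfolding width_def Let_def U_def[symmetric] P_def[symmetric] using hpos by simp
  next
    case False
    have "(SUP g\<in>P. setdist (path_image g) (- U)) \<le> 3 * h"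
      by (rule cSUP_least[OF False bound])
    thus ?thesis using False unfolding width_def Let_def U_def[symmetric] P_def[symmetric] by simp
  qed
  also have "\<dots> < 2 * a" using ha unfolding h_def v_def by simp
  finally show ?thesis .
qed


definition SA :: "real \<Rightarrow> pt \<Rightarrow> pt set" where
  "SA a l = {p. fst l + 1.95 \<le> fst p \<and> fst p \<le> fst l + 1.99 \<and>
     snd l + sqrt (4 - (fst p - fst l)\<^sup>2) - a\<^sup>2 / 8 \<le> snd p \<and>
     snd p \<le> snd l + sqrt (4 - (fst p - fst l)\<^sup>2) - a\<^sup>2 / 16}"

definition bx :: "real \<Rightarrow> real \<Rightarrow> pt set" where
  "bx x y = {x - 0.05 .. x + 0.05} \<times> {y - 0.05 .. y + 0.05}"

definition bxB :: "pt \<Rightarrow> pt \<Rightarrow> pt set" where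
  "bxB l r = bx ((2/3) * (fst l + 1.97) + (1/3) * (fst r - 1.6)) ((2/3) * (snd l + 0.3) + (1/3) * snd r)"
definition bxC :: "pt \<Rightarrow> pt \<Rightarrow> pt set" where
  "bxC l r = bx ((1/3) * (fst l + 1.97) + (2/3) * (fst r - 1.6)) ((1/3) * (snd l + 0.3) + (2/3) * snd r)"
definition bxD :: "pt \<Rightarrow> pt \<Rightarrow> pt set" where
  "bxD l r = bx (fst r - 1.6) (snd r)"

lemma SA_closed: "closed (SA a l)"
  unfolding SA_def by (intro closed_Collect_conj closed_Collect_le continuous_intros)

lemma SA_sets: "SA a l \<in> sets lborel"
  using SA_closed by (simp add: borel_closed)

lemma SA_measure:
  fixes a :: real and l :: pt
  shows "emeasure lborel (SA a l) = ennreal (a\<^sup>2 / 16) * ennreal (1/25)"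
proof -
  obtain l1 l2 where le: "l = (l1, l2)" by (cases l)
  have S2: "SA a l \<in> sets (lborel \<Otimes>\<^sub>M lborel)" unfolding lborel_prod by (rule SA_sets)
  have sec: "emeasure lborel (Pair x -` SA a l) = ennreal (a\<^sup>2 / 16) * indicator {l1 + 1.95 .. l1 + 1.99} x" for x
  proof (cases "x \<in> {l1 + 1.95 .. l1 + 1.99}")
    case True
    have "Pair x -` SA a l = {l2 + sqrt (4 - (x - l1)\<^sup>2) - a\<^sup>2 / 8 .. l2 + sqrt (4 - (x - l1)\<^sup>2) - a\<^sup>2 / 16}"
      using True unfolding SA_def le by auto
    thus ?thesis using True by simp
  next
    case False
    have "Pair x -` SA a l = {}" using False unfolding SA_def le by auto
    thus ?thesis using False by simp
  qed
  have "emeasure lborel (SA a l) = emeasure (lborel \<Otimes>\<^sub>M lborel) (SA a l)" by (simp add: lborel_prod)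
  also have "\<dots> = (\<integral>\<^sup>+x. emeasure lborel (Pair x -` SA a l) \<partial>lborel)"
    by (rule lborel.emeasure_pair_measure_alt[OF S2])
  also have "\<dots> = (\<integral>\<^sup>+x. ennreal (a\<^sup>2 / 16) * indicator {l1 + 1.95 .. l1 + 1.99} x \<partial>lborel)"
    by (simp add: sec)
  also have "\<dots> = ennreal (a\<^sup>2 / 16) * emeasure lborel {l1 + 1.95 .. l1 + 1.99}"
    by (rule nn_integral_cmult_indicator) simp
  also have "\<dots> = ennreal (a\<^sup>2 / 16) * ennreal (1/25)" by simp
  finally show ?thesis .
qed

lemma bx_center: "(x, y) \<in> bx x y"
  unfolding bx_def by simp

lemma bx_sets: "bx x y \<in> sets lborel"
proof -
  have "closed (bx x y)" unfolding bx_def by (intro closed_Times) simp_all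
  thus ?thesis by (simp add: borel_closed)
qed

lemma bx_measure: "emeasure lborel (bx x y) = ennreal (1/10) * ennreal (1/10)"
proof -
  have "emeasure lborel (bx x y) = emeasure (lborel \<Otimes>\<^sub>M lborel) ({x - 0.05 .. x + 0.05} \<times> {y - 0.05 .. y + 0.05})"
    unfolding bx_def by (simp add: lborel_prod)
  also have "\<dots> = emeasure lborel {x - 0.05 .. x + 0.05} * emeasure lborel {y - 0.05 .. y + 0.05}"
    by (rule lborel.emeasure_pair_measure_Times) simp_all
  also have "\<dots> = ennreal (1/10) * ennreal (1/10)" by simp
  finally show ?thesis .
qed

lemma dist_lt2:
  fixes x1 x2 y1 y2 X Y :: real
  assumes "-X \<le> x1 - y1" "x1 - y1 \<le> X" "-Y \<le> x2 - y2" "x2 - y2 \<le> Y" "X\<^sup>2 + Y\<^sup>2 < 4"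
  shows "dist (x1, x2) (y1, y2) < 2"
proof -
  have "\<bar>x1 - y1\<bar> \<le> \<bar>X\<bar>" "\<bar>x2 - y2\<bar> \<le> \<bar>Y\<bar>" using assms by linarith+
  hence "(x1 - y1)\<^sup>2 \<le> X\<^sup>2" "(x2 - y2)\<^sup>2 \<le> Y\<^sup>2" by (simp_all add: abs_le_square_iff)
  hence "(x1 - y1)\<^sup>2 + (x2 - y2)\<^sup>2 < 4" using assms by linarith
  hence "sqrt ((x1 - y1)\<^sup>2 + (x2 - y2)\<^sup>2) < sqrt 4" by (subst real_sqrt_less_iff) simp
  thus ?thesis by (simp add: dist_Pair_Pair dist_real_def)
qed

lemma dot_lb:
  fixes cx cy v1 v2 X Y :: real
  assumes "X \<le> cx" "0 \<le> X" "39/20 \<le> v1" "-Y \<le> cy" "0 \<le> v2" "v2 \<le> (89/200)" "0 \<le> Y"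
  shows "39/20 * X - (89/200) * Y \<le> cx * v1 + cy * v2"
proof -
  have "X * (39/20) \<le> cx * v1" using assms by (intro mult_mono) auto
  moreover have "0 \<le> (cy + Y) * v2" using assms by simp
  moreover have "Y * v2 \<le> Y * (89/200)" using assms by (intro mult_left_mono) auto
  ultimately show ?thesis by (simp add: algebra_simps)
qed

lemma lin1: "(x::real) < 4 \<Longrightarrow> 4 - (89/200) * b / 4 \<le> x \<Longrightarrow> 0 < b \<Longrightarrow> 1 - x / 4 < b / 9"
  by linarith

lemma lin2: "(k::real) \<le> x \<Longrightarrow> n < 4 \<Longrightarrow> 4 \<le> k \<Longrightarrow> 2 < x - n / 2"
  by linarith

lemma config:
  fixes l r A B C D :: pt and a :: real
  assumes l: "l \<in> left_box" and r: "r \<in> right_box" and a: "0 < a" "a \<le> 1"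
    and A: "A \<in> SA a l" and B: "B \<in> bxB l r" and C: "C \<in> bxC l r" and D: "D \<in> bxD l r"
  shows "dist l A < 2" "dist A B < 2" "dist B C < 2" "dist C D < 2" "dist D r < 2"
    "0 < norm (A - l)" "norm (A - l) < 2"
    "2 < inner (B - (l + (1/2) *\<^sub>R (A - l))) (A - l)"
    "2 < inner (C - (l + (1/2) *\<^sub>R (A - l))) (A - l)"
    "2 < inner (D - (l + (1/2) *\<^sub>R (A - l))) (A - l)"
    "2 < inner (r - (l + (1/2) *\<^sub>R (A - l))) (A - l)"
    "3 * sqrt (1 - (norm (A - l))\<^sup>2 / 4) < a"
    "A \<in> Lambda0" "B \<in> Lambda0" "C \<in> Lambda0" "D \<in> Lambda0"
proof -
  obtain l1 l2 where le: "l = (l1, l2)" by (cases l)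
  obtain r1 r2 where re: "r = (r1, r2)" by (cases r)
  obtain a1 a2 where Ae: "A = (a1, a2)" by (cases A)
  obtain b1 b2 where Be: "B = (b1, b2)" by (cases B)
  obtain c1 c2 where Ce: "C = (c1, c2)" by (cases C)
  obtain d1 d2 where De: "D = (d1, d2)" by (cases D)
  have lb: "-3.5 \<le> l1" "l1 \<le> -2.5" "-1 \<le> l2" "l2 \<le> 1" using l unfolding le left_box_def by auto
  have rb: "2.5 \<le> r1" "r1 \<le> 3.5" "-1 \<le> r2" "r2 \<le> 1" using r unfolding re right_box_def by auto
  define v1 where "v1 = a1 - l1"
  define v2 where "v2 = a2 - l2"
  define s where "s = sqrt (4 - v1\<^sup>2)"
  have v1b: "39/20 \<le> v1" "v1 \<le> 1.99" and v2b: "s - a\<^sup>2/8 \<le> v2" "v2 \<le> s - a\<^sup>2/16"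
    using A unfolding SA_def Ae le v1_def v2_def s_def by auto
  have v1sq: "38025/10000 \<le> v1\<^sup>2" "v1\<^sup>2 \<le> 39601/10000"
  proof -
    have "1.95\<^sup>2 \<le> v1\<^sup>2" by (rule power_mono) (use v1b in auto)
    moreover have "v1\<^sup>2 \<le> 1.99\<^sup>2" by (rule power_mono) (use v1b in auto)
    ultimately show "38025/10000 \<le> v1\<^sup>2" "v1\<^sup>2 \<le> 39601/10000" by (simp_all add: power2_eq_square)
  qed
  have ssq: "s\<^sup>2 = 4 - v1\<^sup>2" unfolding s_def using v1sq by simp
  have s_le: "s \<le> (89/200)"
  proof -
    have "s \<le> sqrt 0.198025" unfolding s_def using v1sq by (subst real_sqrt_le_iff) simp
    moreover have "sqrt 0.198025 = ((89/200)::real)" by (rule real_sqrt_unique) (simp_all add: power2_eq_square)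
    ultimately show ?thesis by simp
  qed
  have s_ge: "0.19 \<le> s"
  proof -
    have "sqrt 0.0361 \<le> s" unfolding s_def using v1sq by (subst real_sqrt_le_iff) simp
    moreover have "sqrt 0.0361 = (0.19::real)" by (rule real_sqrt_unique) (simp_all add: power2_eq_square)
    ultimately show ?thesis by simp
  qed
  have a2le: "a\<^sup>2 \<le> 1" using a by (simp add: power_le_one)
  have a2pos: "0 < a\<^sup>2" using a by simp
  have v2b2: "0.065 \<le> v2" "v2 \<le> (89/200)" "v2 < s"
    subgoal using v2b s_le s_ge a2le a2pos by simp
    subgoal using v2b s_le s_ge a2le a2pos by simp
    subgoal using v2b s_le s_ge a2le a2pos by linarith
    done
  have v2sq_hi: "v2\<^sup>2 < s\<^sup>2" using v2b2 by (intro power_strict_mono) auto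
  have "(s - a\<^sup>2/8)\<^sup>2 \<le> v2\<^sup>2" using v2b s_ge a2le by (intro power_mono) auto
  moreover have "(s - a\<^sup>2/8)\<^sup>2 = s\<^sup>2 - s * a\<^sup>2 / 4 + (a\<^sup>2/8)\<^sup>2" by (simp add: power2_eq_square algebra_simps)
  moreover have "0 \<le> (a\<^sup>2/8)\<^sup>2" by simp
  ultimately have v2sq_lo: "s\<^sup>2 - s * a\<^sup>2 / 4 \<le> v2\<^sup>2" by linarith
  have "s * a\<^sup>2 \<le> (89/200) * a\<^sup>2" using s_le by (intro mult_right_mono) auto
  note nlin = this
  have nA: "norm (A - l) = sqrt (v1\<^sup>2 + v2\<^sup>2)"
    unfolding Ae le v1_def v2_def by (simp add: norm_Pair)
  have vv: "v1\<^sup>2 + v2\<^sup>2 < 4" "4 - (89/200) * a\<^sup>2 / 4 \<le> v1\<^sup>2 + v2\<^sup>2"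
    using v2sq_hi v2sq_lo ssq nlin by linarith+
  have vpos: "0 < v1\<^sup>2 + v2\<^sup>2" using v1sq zero_le_power2[of v2] by linarith
  show "0 < norm (A - l)" unfolding nA using vpos by simp
  have "sqrt (v1\<^sup>2 + v2\<^sup>2) < sqrt 4" using vv by (subst real_sqrt_less_iff) simp
  thus "norm (A - l) < 2" unfolding nA by simp
  have nA2: "(norm (A - l))\<^sup>2 = v1\<^sup>2 + v2\<^sup>2" unfolding nA using vpos by simp
  show "dist l A < 2" using \<open>norm (A - l) < 2\<close> by (simp add: dist_norm norm_minus_commute)
  show "3 * sqrt (1 - (norm (A - l))\<^sup>2 / 4) < a"
  proof -
    have "1 - (v1\<^sup>2 + v2\<^sup>2) / 4 < a\<^sup>2 / 9" by (rule lin1[OF vv a2pos])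
    hence "1 - (norm (A - l))\<^sup>2 / 4 < (a/3)\<^sup>2" unfolding nA2 by (simp add: power_divide)
    hence "sqrt (1 - (norm (A - l))\<^sup>2 / 4) < sqrt ((a/3)\<^sup>2)" by (subst real_sqrt_less_iff) 
    thus ?thesis using a by simp
  qed
  have Bb0: "(2/3) * (l1 + 197/100) + (1/3) * (r1 - 8/5) - 1/20 \<le> b1"
    "b1 \<le> (2/3) * (l1 + 197/100) + (1/3) * (r1 - 8/5) + 1/20"
    "(2/3) * (l2 + 3/10) + (1/3) * r2 - 1/20 \<le> b2" "b2 \<le> (2/3) * (l2 + 3/10) + (1/3) * r2 + 1/20"
    using B unfolding bxB_def bx_def Be le re by auto
  have Cb0: "(1/3) * (l1 + 197/100) + (2/3) * (r1 - 8/5) - 1/20 \<le> c1"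
    "c1 \<le> (1/3) * (l1 + 197/100) + (2/3) * (r1 - 8/5) + 1/20"
    "(1/3) * (l2 + 3/10) + (2/3) * r2 - 1/20 \<le> c2" "c2 \<le> (1/3) * (l2 + 3/10) + (2/3) * r2 + 1/20"
    using C unfolding bxC_def bx_def Ce le re by auto
  have Db0: "r1 - 8/5 - 1/20 \<le> d1" "d1 \<le> r1 - 8/5 + 1/20" "r2 - 1/20 \<le> d2" "d2 \<le> r2 + 1/20"
    using D unfolding bxD_def bx_def De le re by auto
  have Bb: "2/3*l1 + 1/3*r1 + 39/50 - 1/20 \<le> b1" "b1 \<le> 2/3*l1 + 1/3*r1 + 39/50 + 1/20"
    "2/3*l2 + 1/3*r2 + 1/5 - 1/20 \<le> b2" "b2 \<le> 2/3*l2 + 1/3*r2 + 1/5 + 1/20"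
    using Bb0 by (simp_all add: algebra_simps)
  have Cb: "1/3*l1 + 2/3*r1 - 41/100 - 1/20 \<le> c1" "c1 \<le> 1/3*l1 + 2/3*r1 - 41/100 + 1/20"
    "1/3*l2 + 2/3*r2 + 1/10 - 1/20 \<le> c2" "c2 \<le> 1/3*l2 + 2/3*r2 + 1/10 + 1/20"
    using Cb0 by (simp_all add: algebra_simps)
  have Db: "r1 - 33/20 \<le> d1" "d1 \<le> r1 - 31/20" "r2 - 1/20 \<le> d2" "d2 \<le> r2 + 1/20"
    using Db0 by (simp_all add: algebra_simps)
  have lb': "-7/2 \<le> l1" "l1 \<le> -5/2" "-1 \<le> l2" "l2 \<le> 1" using lb by simp_all
  have rb': "5/2 \<le> r1" "r1 \<le> 7/2" "-1 \<le> r2" "r2 \<le> 1" using rb by simp_all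
  have v1b': "39/20 \<le> v1" "v1 \<le> 199/100" using v1b by simp_all
  have v2b': "13/200 \<le> v2" "v2 \<le> 89/200" using v2b2 by simp_all
  have a1e: "a1 = l1 + v1" and a2e: "a2 = l2 + v2" unfolding v1_def v2_def by simp_all
  show "dist A B < 2" unfolding Ae Be
  proof (rule dist_lt2[where X="5/4" and Y=1])
    show "-(5/4) \<le> a1 - b1" using Bb(1,2) lb'(1,2) rb'(1,2) v1b' a1e by linarith
    show "a1 - b1 \<le> 5/4" using Bb(1,2) lb'(1,2) rb'(1,2) v1b' a1e by linarith
    show "-1 \<le> a2 - b2" using Bb(3,4) lb'(3,4) rb'(3,4) v2b' a2e by linarith
    show "a2 - b2 \<le> 1" using Bb(3,4) lb'(3,4) rb'(3,4) v2b' a2e by linarith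
  qed (simp add: power2_eq_square)
  show "dist B C < 2" unfolding Ce Be
  proof (rule dist_lt2[where X="5/4" and Y="9/10"])
    show "-(5/4) \<le> b1 - c1" using Bb(1,2) Cb(1,2) lb'(1,2) rb'(1,2) by linarith
    show "b1 - c1 \<le> 5/4" using Bb(1,2) Cb(1,2) lb'(1,2) rb'(1,2) by linarith
    show "-(9/10) \<le> b2 - c2" using Bb(3,4) Cb(3,4) lb'(3,4) rb'(3,4) by linarith
    show "b2 - c2 \<le> 9/10" using Bb(3,4) Cb(3,4) lb'(3,4) rb'(3,4) by linarith
  qed (simp add: power2_eq_square)
  show "dist C D < 2" unfolding Ce De
  proof (rule dist_lt2[where X="5/4" and Y="9/10"])
    show "-(5/4) \<le> c1 - d1" using Db(1,2) Cb(1,2) lb'(1,2) rb'(1,2) by linarith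
    show "c1 - d1 \<le> 5/4" using Db(1,2) Cb(1,2) lb'(1,2) rb'(1,2) by linarith
    show "-(9/10) \<le> c2 - d2" using Db(3,4) Cb(3,4) lb'(3,4) rb'(3,4) by linarith
    show "c2 - d2 \<le> 9/10" using Db(3,4) Cb(3,4) lb'(3,4) rb'(3,4) by linarith
  qed (simp add: power2_eq_square)
  show "dist D r < 2" unfolding re De
  proof (rule dist_lt2[where X="33/20" and Y="1/20"])
    show "-(33/20) \<le> d1 - r1" using Db(1,2) by linarith
    show "d1 - r1 \<le> 33/20" using Db(1,2) by linarith
    show "-(1/20) \<le> d2 - r2" using Db(3,4) by linarith
    show "d2 - r2 \<le> 1/20" using Db(3,4) by linarith
  qed (simp add: power2_eq_square)
  have inner_eq: "inner ((x1, x2) - (l + (1/2) *\<^sub>R (A - l))) (A - l) = (x1 - l1) * v1 + (x2 - l2) * v2 - (v1\<^sup>2 + v2\<^sup>2)/2"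
    for x1 x2
    unfolding Ae le v1_def v2_def by (simp add: inner_Pair power2_eq_square field_simps)
  show "2 < inner (B - (l + (1/2) *\<^sub>R (A - l))) (A - l)"
  proof -
    have "39/20 * (239/100) - (89/200) * (13/25) \<le> (b1 - l1) * v1 + (b2 - l2) * v2"
      by (rule dot_lb) (use Bb(1,3) lb' rb' v1b' v2b' in linarith)+
    thus ?thesis unfolding Be inner_eq by (rule lin2[OF _ vv(1)]) simp
  qed
  show "2 < inner (C - (l + (1/2) *\<^sub>R (A - l))) (A - l)"
  proof -
    have "39/20 * (287/100) - (89/200) * (129/100) \<le> (c1 - l1) * v1 + (c2 - l2) * v2"
      by (rule dot_lb) (use Cb(1,3) lb' rb' v1b' v2b' in linarith)+
    thus ?thesis unfolding Ce inner_eq by (rule lin2[OF _ vv(1)]) simp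
  qed
  show "2 < inner (D - (l + (1/2) *\<^sub>R (A - l))) (A - l)"
  proof -
    have "39/20 * (67/20) - (89/200) * (41/20) \<le> (d1 - l1) * v1 + (d2 - l2) * v2"
      by (rule dot_lb) (use Db(1,3) lb' rb' v1b' v2b' in linarith)+
    thus ?thesis unfolding De inner_eq by (rule lin2[OF _ vv(1)]) simp
  qed
  show "2 < inner (r - (l + (1/2) *\<^sub>R (A - l))) (A - l)"
  proof -
    have "39/20 * 5 - (89/200) * 2 \<le> (r1 - l1) * v1 + (r2 - l2) * v2"
      by (rule dot_lb) (use lb' rb' v1b' v2b' in linarith)+
    thus ?thesis unfolding re inner_eq by (rule lin2[OF _ vv(1)]) simp
  qed
  show "A \<in> Lambda0" unfolding Ae Lambda0_def mem_Times_iff atLeastAtMost_iff fst_conv snd_conv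
    using a1e a2e lb' v1b' v2b' by (intro conjI; linarith)
  show "B \<in> Lambda0" unfolding Be Lambda0_def mem_Times_iff atLeastAtMost_iff fst_conv snd_conv
    using Bb lb' rb' by (intro conjI; linarith)
  show "C \<in> Lambda0" unfolding Ce Lambda0_def mem_Times_iff atLeastAtMost_iff fst_conv snd_conv
    using Cb lb' rb' by (intro conjI; linarith)
  show "D \<in> Lambda0" unfolding De Lambda0_def mem_Times_iff atLeastAtMost_iff fst_conv snd_conv
    using Db lb' rb' by (intro conjI; linarith)
qed


theorem lemma5p1:
  fixes lam :: real
  assumes "lam > 0"
  shows "\<exists>c0 > 0. \<forall>a \<in> {0..1}. \<forall>l \<in> left_box. \<forall>r \<in> right_box.
           ppp_prob lam Lambda0 {X. 0 < width l r X \<and> width l r X < 2 * a}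
             \<ge> ennreal (c0 * a\<^sup>2)"
proof -
  define K where "K = exp (- lam * measure lborel Lambda0) * lam ^ 4 / fact 4"
  have Kpos: "0 < K" using assms unfolding K_def by simp
  define c0 where "c0 = K / 400000000"
  have c0pos: "0 < c0" using Kpos unfolding c0_def by simp
  have L0: "Lambda0 \<in> sets lborel"
  proof -
    have "closed Lambda0" unfolding Lambda0_def by (intro closed_Times) simp_all
    thus ?thesis by (simp add: borel_closed)
  qed
  define M where "M = restrict_space lborel Lambda0"
  have sfM: "sigma_finite_measure M"
    unfolding M_def by (rule sigma_finite_measure_restrict_space[OF lborel.sigma_finite_measure_axioms L0])
  interpret PS: product_sigma_finite "\<lambda>_::nat. M"
    unfolding product_sigma_finite_def using sfM by simp
  have L0': "Lambda0 \<inter> space lborel \<in> sets lborel" using L0 by simp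
  show ?thesis
  proof (intro exI[of _ c0] conjI ballI)
    show "0 < c0" by (rule c0pos)
    fix a :: real and l r :: pt assume a: "a \<in> {0..1}" and l: "l \<in> left_box" and r: "r \<in> right_box"
    show "ennreal (c0 * a\<^sup>2) \<le> ppp_prob lam Lambda0 {X. 0 < width l r X \<and> width l r X < 2 * a}"
    proof (cases "a = 0")
      case True
      thus ?thesis by simp
    next
      case False
      hence apos: "0 < a" and a1: "a \<le> 1" using a by auto
      define E where "E = {X. 0 < width l r X \<and> width l r X < 2 * a}"
      define G where "G = (\<lambda>i::nat. if i = 0 then SA a l else if i = 1 then bxB l r
                              else if i = 2 then bxC l r else bxD l r)"
      have cfg: "xs ` {..<4} \<in> E" if xs: "xs \<in> PiE {..<4} G" for xs
      proof -
        have m: "xs 0 \<in> SA a l" "xs 1 \<in> bxB l r" "xs 2 \<in> bxC l r" "xs 3 \<in> bxD l r"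
        proof -
          have xi: "xs i \<in> G i" if "i < 4" for i using xs that by (auto simp: PiE_iff)
          show "xs 0 \<in> SA a l" "xs 1 \<in> bxB l r" "xs 2 \<in> bxC l r" "xs 3 \<in> bxD l r"
            using xi[of 0] xi[of 1] xi[of 2] xi[of 3] unfolding G_def by simp_all
        qed
        note c = config[OF l r apos a1 m]
        have img: "xs ` {..<4} = {xs 0, xs 1, xs 2, xs 3}"
        proof -
          have "{..<4::nat} = {0,1,2,3}" by auto
          thus ?thesis by simp
        qed
        show ?thesis unfolding img E_def
          using width_pos[OF c(1-5)] width_small[OF c(6-12)] by simp
      qed
      have Gsub: "G i \<subseteq> Lambda0" for i
      proof -
        define A0 :: pt where "A0 = (fst l + 1.97, snd l + sqrt (4 - 1.97\<^sup>2) - 3 * a\<^sup>2 / 32)"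
        define B0 :: pt where "B0 = ((2/3) * (fst l + 1.97) + (1/3) * (fst r - 1.6), (2/3) * (snd l + 0.3) + (1/3) * snd r)"
        define C0 :: pt where "C0 = ((1/3) * (fst l + 1.97) + (2/3) * (fst r - 1.6), (1/3) * (snd l + 0.3) + (2/3) * snd r)"
        define D0 :: pt where "D0 = (fst r - 1.6, snd r)"
        have A0: "A0 \<in> SA a l" unfolding A0_def SA_def using apos by simp
        have B0: "B0 \<in> bxB l r" unfolding B0_def bxB_def by (rule bx_center)
        have C0: "C0 \<in> bxC l r" unfolding C0_def bxC_def by (rule bx_center)
        have D0: "D0 \<in> bxD l r" unfolding D0_def bxD_def by (rule bx_center)
        show ?thesis unfolding G_def
          using config(13)[OF l r apos a1 _ B0 C0 D0] config(14)[OF l r apos a1 A0 _ C0 D0]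
            config(15)[OF l r apos a1 A0 B0 _ D0] config(16)[OF l r apos a1 A0 B0 C0] by auto
      qed
      have Gsets: "G i \<in> sets M" for i
      proof -
        have "G i \<in> sets lborel" unfolding G_def using SA_sets bx_sets
          by (simp add: bxB_def bxC_def bxD_def)
        thus ?thesis unfolding M_def using Gsub[of i] by (simp add: sets_restrict_space_iff[OF L0'])
      qed
      have GM: "emeasure M (G i) = emeasure lborel (G i)" for i
        unfolding M_def by (rule emeasure_restrict_space[OF L0' Gsub])
      have "emeasure (PiM {..<4::nat} (\<lambda>_. M)) (PiE {..<4} G) = (\<Prod>i<4. emeasure M (G i))"
        by (rule PS.emeasure_PiM) (simp_all add: Gsets)
      also have "\<dots> = emeasure lborel (G 0) * emeasure lborel (G 1) * emeasure lborel (G 2) * emeasure lborel (G 3)"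
      proof -
        have "{..<4::nat} = {0,1,2,3}" by auto
        thus ?thesis by (simp add: GM mult.assoc)
      qed
      also have "\<dots> = ennreal (a\<^sup>2 / 400000000)"
        unfolding G_def by (simp add: SA_measure bx_measure bxB_def bxC_def bxD_def ennreal_mult'[symmetric]
            ennreal_mult[symmetric])
      finally have meas: "emeasure (PiM {..<4::nat} (\<lambda>_. M)) (PiE {..<4} G) = ennreal (a\<^sup>2 / 400000000)" .
      have PiEsets: "PiE {..<4} G \<in> sets (PiM {..<4::nat} (\<lambda>_. M))"
        by (rule sets_PiM_I_finite) (simp_all add: Gsets)
      have "ennreal (a\<^sup>2 / 400000000) = (\<integral>\<^sup>+ xs. indicator (PiE {..<4} G) xs \<partial>(PiM {..<4::nat} (\<lambda>_. M)))"
        using meas nn_integral_indicator[OF PiEsets] by simp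
      also have "\<dots> \<le> (\<integral>\<^sup>+ xs. indicator E (xs ` {..<4::nat}) \<partial>(PiM {..<4::nat} (\<lambda>_. M)))"
        by (rule nn_integral_mono) (auto simp: indicator_def cfg)
      finally have intb: "ennreal (a\<^sup>2 / 400000000) \<le> (\<integral>\<^sup>+ xs. indicator E (xs ` {..<4::nat}) \<partial>(PiM {..<4::nat} (\<lambda>_. M)))" .
      define F where "F = (\<lambda>n. ennreal (exp (- lam * measure lborel Lambda0) * lam ^ n / fact n) *
        (\<integral>\<^sup>+ xs. indicator E (xs ` {..<n}) \<partial>(PiM {..<n} (\<lambda>_. restrict_space lborel Lambda0))))"
      have "ennreal (c0 * a\<^sup>2) = ennreal K * ennreal (a\<^sup>2 / 400000000)"
        using Kpos by (simp add: c0_def ennreal_mult'[symmetric] ennreal_mult[symmetric])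
      also have "\<dots> \<le> ennreal K * (\<integral>\<^sup>+ xs. indicator E (xs ` {..<4::nat}) \<partial>(PiM {..<4::nat} (\<lambda>_. M)))"
        by (rule mult_left_mono[OF intb]) simp
      also have "\<dots> = F 4" unfolding F_def K_def M_def by simp
      also have "\<dots> = sum F {4}" by simp
      also have "\<dots> \<le> suminf F" by (rule sum_le_suminf) auto
      also have "\<dots> = ppp_prob lam Lambda0 {X. 0 < width l r X \<and> width l r X < 2 * a}"
        unfolding ppp_prob_def F_def E_def ..
      finally show ?thesis .
    qed
  qed
qed

end
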